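(* Let $X$ be a real random variable such that $\mathbb{E}[e^{-X}]$ is finite. Then $X$ has the standard Gumbel distribution $\mathcal{G}(0,1)$ if and only if \[ \mathbb{E}[f'(X)]=\mathbb{E}\big[e^{-X}f'(X+Y)\big]\quad\text{for all } f\in\mathrm{Lip}_{[2]}(\mathbb{R}), \] where $Y$ has the exponential distribution $\mathcal{E}(1)$ and is independent of $X$.
   Context: The standard Gumbel distribution $\mathcal{G}(0,1)$ has density $x\mapsto e^{-(x+e^{-x})}$ on $\mathbb{R}$. $\mathrm{Lip}_{[2]}(\mathbb{R})$ is the set of Lipschitz functions $f:\mathbb{R}\to\mathbb{R}$ whose derivative $f'$ admits a Lipschitz representative (functions need not be bounded). *)

theory Defs
  imports "HOL-Probability.Probability"
begin

definition gumbel_density :: "real \<Rightarrow> real" where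
  "gumbel_density x = exp (- (x + exp (- x)))"

definition Lip2 :: "(real \<Rightarrow> real) \<Rightarrow> (real \<Rightarrow> real) \<Rightarrow> bool" where
  "Lip2 f f' \<longleftrightarrow> (\<exists>L. L-lipschitz_on UNIV f) \<and> (\<exists>L. L-lipschitz_on UNIV f')
     \<and> (\<forall>x. (f has_real_derivative f' x) (at x))"

end

theory Submission
  imports Defs
begin

lemma transl:
  fixes g :: "real \<Rightarrow> real" and x :: real
  shows "(\<integral>y. exponential_density 1 y * (exp (-x) * g (x + y)) \<partial>lborel) = (\<integral>t. indicator {x..} t * (g t * exp (-t)) \<partial>lborel)"
   and "integrable lborel (\<lambda>y. exponential_density 1 y * (exp (-x) * g (x + y))) \<longleftrightarrow> integrable lborel (\<lambda>t. indicator {x..} t * (g t * exp (-t)))"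
proof -
  define R where "R = (\<lambda>t. indicator {x..} t * (g t * exp (-t)) :: real)"
  have eq: "(\<lambda>y. exponential_density 1 y * (exp (-x) * g (x + y))) = (\<lambda>y. R (x + 1 * y))"
    by (auto simp: R_def exponential_density_def indicator_def mult_exp_exp)
  have "integral\<^sup>L lborel R = \<bar>1\<bar> *\<^sub>R (LBINT y. R (x + 1 * y))"
    by (rule lborel_integral_real_affine) simp
  then show "(\<integral>y. exponential_density 1 y * (exp (-x) * g (x + y)) \<partial>lborel) = (\<integral>t. indicator {x..} t * (g t * exp (-t)) \<partial>lborel)"
    unfolding eq by (simp add: R_def[symmetric])
  have "integrable lborel (\<lambda>y. R (x + 1 * y)) \<longleftrightarrow> integrable lborel R"
    by (rule lborel_integrable_real_affine_iff) simp
  then show "integrable lborel (\<lambda>y. exponential_density 1 y * (exp (-x) * g (x + y))) \<longleftrightarrow> integrable lborel (\<lambda>t. indicator {x..} t * (g t * exp (-t)))"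
    unfolding eq by (simp add: R_def[symmetric])
qed

lemma lip_deriv:
  fixes g g' :: "real \<Rightarrow> real"
  assumes "\<And>x. (g has_real_derivative g' x) (at x)" and "\<And>x. \<bar>g' x\<bar> \<le> C"
  shows "C-lipschitz_on UNIV g"
proof (rule lipschitz_onI)
  show "0 \<le> C" using assms(2)[of 0] by linarith
  fix x y :: real
  show "dist (g x) (g y) \<le> C * dist x y"
  proof (cases x y rule: linorder_cases)
    case less
    then obtain z where "g y - g x = (y - x) * g' z" using MVT2[of x y g g'] assms(1) by blast
    then have "\<bar>g x - g y\<bar> = \<bar>(y - x) * g' z\<bar>" by (metis abs_minus_commute)
    then have "\<bar>g x - g y\<bar> = \<bar>g' z\<bar> * (y - x)" using less by (simp add: abs_mult)
    then show ?thesis using less assms(2)[of z] by (simp add: dist_real_def mult_right_mono)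
  next
    case greater
    then obtain z where "g x - g y = (x - y) * g' z" using MVT2[of y x g g'] assms(1) by blast
    then have "\<bar>g x - g y\<bar> = \<bar>g' z\<bar> * (x - y)" using greater by (simp add: abs_mult)
    then show ?thesis using greater assms(2)[of z] by (simp add: dist_real_def mult_right_mono)
  qed simp
qed

lemma lip_deriv_bound:
  fixes f :: "real \<Rightarrow> real"
  assumes "L-lipschitz_on UNIV f" "(f has_real_derivative D) (at x)"
  shows "\<bar>D\<bar> \<le> L"
proof -
  have "((\<lambda>h. (f (x + h) - f x) / h) \<longlongrightarrow> D) (at 0)"
    using assms(2) by (simp add: DERIV_def)
  then have "((\<lambda>h. \<bar>(f (x + h) - f x) / h\<bar>) \<longlongrightarrow> \<bar>D\<bar>) (at 0)"
    by (rule tendsto_rabs)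
  moreover have "\<forall>\<^sub>F h in at 0. \<bar>(f (x + h) - f x) / h\<bar> \<le> L"
    unfolding eventually_at_filter
  proof (intro always_eventually allI impI)
    fix h :: real assume h: "h \<noteq> 0"
    have "\<bar>f (x + h) - f x\<bar> \<le> L * \<bar>h\<bar>"
      using lipschitz_onD[OF assms(1), of "x+h" x] by (simp add: dist_real_def)
    then show "\<bar>(f (x + h) - f x) / h\<bar> \<le> L" using h by (simp add: abs_divide divide_le_eq)
  qed
  ultimately show ?thesis by (rule tendsto_upperbound) simp
qed

lemma key:
  fixes M :: "'a measure" and X Y :: "'a \<Rightarrow> real" and h :: "real \<Rightarrow> real"
  assumes P: "prob_space M" and Xm[measurable]: "X \<in> borel_measurable M"
    and int: "integrable M (\<lambda>\<omega>. exp (- X \<omega>))"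
    and D: "distributed M lborel Y (exponential_density 1)"
    and I: "prob_space.indep_var M borel X borel Y"
    and hm[measurable]: "h \<in> borel_measurable borel" and hb: "\<And>x. \<bar>h x\<bar> \<le> B"
  shows "integrable lborel (\<lambda>t. h t * (exp (-t) * cdf (distr M borel X) t))"
    and "(\<integral>\<omega>. exp (- X \<omega>) * h (X \<omega> + Y \<omega>) \<partial>M) = (\<integral>t. h t * (exp (-t) * cdf (distr M borel X) t) \<partial>lborel)"
proof -
  interpret prob_space M by (rule P)
  have Ym[measurable]: "Y \<in> borel_measurable M" using distributed_measurable[OF D] by simp
  define \<mu> where "\<mu> = distr M borel X"
  define \<nu> where "\<nu> = distr M borel Y"
  interpret \<mu>: prob_space \<mu> unfolding \<mu>_def by (rule prob_space_distr) simp
  interpret \<nu>: prob_space \<nu> unfolding \<nu>_def by (rule prob_space_distr) simp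
  interpret \<mu>\<nu>: pair_prob_space \<mu> \<nu> ..
  interpret \<mu>L: pair_sigma_finite \<mu> lborel
    by (intro pair_sigma_finite.intro \<mu>.sigma_finite_measure_axioms lborel.sigma_finite_measure_axioms)
  have s\<mu>[simp, measurable_cong]: "sets \<mu> = sets borel" by (simp add: \<mu>_def)
  have s\<nu>[simp, measurable_cong]: "sets \<nu> = sets borel" by (simp add: \<nu>_def)
  have "distr M borel Y = distr M lborel Y" by (rule distr_cong) auto
  then have \<nu>d: "\<nu> = density lborel (exponential_density 1)"
    using D unfolding distributed_def \<nu>_def by simp
  have ed_nn: "\<And>y. 0 \<le> exponential_density 1 y" by (simp add: exponential_density_def)
  have int\<mu>: "integrable \<mu> (\<lambda>x. exp (-x))" unfolding \<mu>_def using int by (subst integrable_distr_eq) auto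
  have inner: "integrable lborel (\<lambda>t. indicator {x..} t * (g t * exp (-t))) \<and>
       (\<integral>y. exp (-x) * g (x + y) \<partial>\<nu>) = (\<integral>t. indicator {x..} t * (g t * exp (-t)) \<partial>lborel)
     \<and> \<bar>\<integral>y. exp (-x) * g (x + y) \<partial>\<nu>\<bar> \<le> exp (-x) * C"
    if gm[measurable]: "g \<in> borel_measurable borel" and gb: "\<And>t. \<bar>g t\<bar> \<le> C" for g x C
  proof (intro conjI)
    have b: "\<bar>exp (-x) * g (x + y)\<bar> \<le> exp (-x) * C" for y
      using gb[of "x+y"] by (simp add: abs_mult)
    have i\<nu>: "integrable \<nu> (\<lambda>y. exp (-x) * g (x + y))"
      by (rule \<nu>.integrable_const_bound[where B="exp (-x) * C"]) (use b in auto)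
    have "integrable lborel (\<lambda>y. exponential_density 1 y * (exp (-x) * g (x + y)))"
      using i\<nu> unfolding \<nu>d by (subst (asm) integrable_density) (auto simp: ed_nn)
    then show "integrable lborel (\<lambda>t. indicator {x..} t * (g t * exp (-t)))"
      using transl(2) by blast
    have "(\<integral>y. exp (-x) * g (x + y) \<partial>\<nu>) = (\<integral>y. exponential_density 1 y * (exp (-x) * g (x + y)) \<partial>lborel)"
      unfolding \<nu>d by (subst integral_density) (auto simp: ed_nn)
    then show "(\<integral>y. exp (-x) * g (x + y) \<partial>\<nu>) = (\<integral>t. indicator {x..} t * (g t * exp (-t)) \<partial>lborel)"
      using transl(1) by simp
    have "\<bar>\<integral>y. exp (-x) * g (x + y) \<partial>\<nu>\<bar> \<le> (\<integral>y. \<bar>exp (-x) * g (x + y)\<bar> \<partial>\<nu>)"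
      by (rule integral_abs_bound)
    also have "\<dots> \<le> (\<integral>y. exp (-x) * C \<partial>\<nu>)"
      by (rule integral_mono) (use b i\<nu> in auto)
    also have "\<dots> = exp (-x) * C" by (simp add: \<nu>.prob_space)
    finally show "\<bar>\<integral>y. exp (-x) * g (x + y) \<partial>\<nu>\<bar> \<le> exp (-x) * C" .
  qed
  have habs[measurable]: "(\<lambda>t. \<bar>h t\<bar>) \<in> borel_measurable borel" by measurable
  have hb': "\<And>t. \<bar>\<bar>h t\<bar>\<bar> \<le> B" using hb by simp
  have B0: "0 \<le> B" using hb[of 0] by linarith
  have int1: "integrable (\<mu> \<Otimes>\<^sub>M \<nu>) (\<lambda>p. exp (- fst p) * h (fst p + snd p))"
  proof (rule \<mu>\<nu>.Fubini_integrable)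
    show "(\<lambda>p. exp (- fst p) * h (fst p + snd p)) \<in> borel_measurable (\<mu> \<Otimes>\<^sub>M \<nu>)" by measurable
    show "integrable \<mu> (\<lambda>x. \<integral>y. norm (exp (- fst (x, y)) * h (fst (x, y) + snd (x, y))) \<partial>\<nu>)"
    proof (rule Bochner_Integration.integrable_bound[where f="\<lambda>x. B * exp (-x)"])
      show "integrable \<mu> (\<lambda>x. B * exp (-x))" using int\<mu> by simp
      show "(\<lambda>x. \<integral>y. norm (exp (- fst (x, y)) * h (fst (x, y) + snd (x, y))) \<partial>\<nu>) \<in> borel_measurable \<mu>"
        by measurable
      show "AE x in \<mu>. norm (\<integral>y. norm (exp (- fst (x, y)) * h (fst (x, y) + snd (x, y))) \<partial>\<nu>) \<le> norm (B * exp (-x))"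
      proof (intro AE_I2)
        fix x
        have "\<bar>\<integral>y. exp (-x) * \<bar>h (x + y)\<bar> \<partial>\<nu>\<bar> \<le> exp (-x) * B"
          using conjunct2[OF conjunct2[OF inner[of "\<lambda>t. \<bar>h t\<bar>" B x, OF habs hb']]] .
        moreover have "(\<lambda>y. norm (exp (- fst (x, y)) * h (fst (x, y) + snd (x, y)))) = (\<lambda>y. exp (-x) * \<bar>h (x + y)\<bar>)"
          by (simp add: abs_mult)
        ultimately show "norm (\<integral>y. norm (exp (- fst (x, y)) * h (fst (x, y) + snd (x, y))) \<partial>\<nu>) \<le> norm (B * exp (-x))"
          using B0 by (simp only: real_norm_def) (simp add: abs_mult mult.commute)
      qed
    qed
    show "AE x in \<mu>. integrable \<nu> (\<lambda>y. exp (- fst (x, y)) * h (fst (x, y) + snd (x, y)))"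
    proof (intro AE_I2)
      fix x show "integrable \<nu> (\<lambda>y. exp (- fst (x, y)) * h (fst (x, y) + snd (x, y)))"
        by (rule \<nu>.integrable_const_bound[where B="exp (-x) * B"]) (use hb in \<open>auto simp: abs_mult intro: mult_left_mono\<close>)
    qed
  qed
  have ind_if: "\<And>x t v. indicator {x..} t * v = (if x \<le> t then v else (0::real))"
    by (simp add: indicator_def)
  have int2: "integrable (\<mu> \<Otimes>\<^sub>M lborel) (\<lambda>(x, t). if x \<le> t then h t * exp (- t) else 0)"
  proof (rule \<mu>L.Fubini_integrable)
    show "(\<lambda>(x, t). if x \<le> t then h t * exp (- t) else 0) \<in> borel_measurable (\<mu> \<Otimes>\<^sub>M lborel)"
      by measurable
    show "integrable \<mu> (\<lambda>x. \<integral>y. norm ((\<lambda>(x, t). if x \<le> t then h t * exp (- t) else 0) (x, y)) \<partial>lborel)"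
    proof (rule Bochner_Integration.integrable_bound[where f="\<lambda>x. B * exp (-x)"])
      show "integrable \<mu> (\<lambda>x. B * exp (-x))" using int\<mu> by simp
      show "(\<lambda>x. \<integral>y. norm ((\<lambda>(x, t). if x \<le> t then h t * exp (- t) else 0) (x, y)) \<partial>lborel) \<in> borel_measurable \<mu>"
        by measurable
      show "AE x in \<mu>. norm (\<integral>y. norm ((\<lambda>(x, t). if x \<le> t then h t * exp (- t) else 0) (x, y)) \<partial>lborel) \<le> norm (B * exp (-x))"
      proof (intro AE_I2)
        fix x
        have i: "\<bar>\<integral>y. exp (-x) * \<bar>h (x + y)\<bar> \<partial>\<nu>\<bar> \<le> exp (-x) * B"
          using conjunct2[OF conjunct2[OF inner[of "\<lambda>t. \<bar>h t\<bar>" B x, OF habs hb']]] .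
        have e: "(\<integral>y. exp (-x) * \<bar>h (x + y)\<bar> \<partial>\<nu>) = (\<integral>t. indicator {x..} t * (\<bar>h t\<bar> * exp (-t)) \<partial>lborel)"
          using conjunct1[OF conjunct2[OF inner[of "\<lambda>t. \<bar>h t\<bar>" B x, OF habs hb']]] .
        have feq: "(\<lambda>y. norm ((\<lambda>(x, t). if x \<le> t then h t * exp (- t) else 0) (x, y))) = (\<lambda>t. indicator {x..} t * (\<bar>h t\<bar> * exp (-t)))"
          by (auto simp: indicator_def abs_mult)
        have j: "\<bar>\<integral>t. indicator {x..} t * (\<bar>h t\<bar> * exp (-t)) \<partial>lborel\<bar> \<le> exp (-x) * B"
          using i by (simp only: e)
        have "\<bar>B * exp (-x)\<bar> = exp (-x) * B" using B0 by simp
        then show "norm (\<integral>y. norm ((\<lambda>(x, t). if x \<le> t then h t * exp (- t) else 0) (x, y)) \<partial>lborel) \<le> norm (B * exp (-x))"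
          unfolding feq using j by simp
      qed
    qed
    show "AE x in \<mu>. integrable lborel (\<lambda>y. (\<lambda>(x, t). if x \<le> t then h t * exp (- t) else 0) (x, y))"
    proof (intro AE_I2)
      fix x
      have "integrable lborel (\<lambda>t. indicator {x..} t * (h t * exp (-t)))"
        using conjunct1[OF inner[of h B x, OF hm hb]] .
      then show "integrable lborel (\<lambda>y. (\<lambda>(x, t). if x \<le> t then h t * exp (- t) else 0) (x, y))"
        by (simp add: ind_if)
    qed
  qed
  have col: "(\<integral>x. (if x \<le> t then h t * exp (-t) else 0) \<partial>\<mu>) = h t * (exp (-t) * cdf \<mu> t)" for t
  proof -
    have "(\<lambda>x. if x \<le> t then h t * exp (-t) else 0) = (\<lambda>x. indicator {..t} x * (h t * exp (-t)))"
      by (auto simp: indicator_def)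
    then show ?thesis by (simp add: cdf_def \<mu>.emeasure_finite)
  qed
  show "integrable lborel (\<lambda>t. h t * (exp (-t) * cdf (distr M borel X) t))"
    using \<mu>L.integrable_snd[OF int2] col by (simp add: \<mu>_def)
  have "(\<integral>\<omega>. exp (- X \<omega>) * h (X \<omega> + Y \<omega>) \<partial>M) = (\<integral>p. exp (- fst p) * h (fst p + snd p) \<partial>(distr M (borel \<Otimes>\<^sub>M borel) (\<lambda>\<omega>. (X \<omega>, Y \<omega>))))"
    by (subst integral_distr) auto
  also have "distr M (borel \<Otimes>\<^sub>M borel) (\<lambda>\<omega>. (X \<omega>, Y \<omega>)) = \<mu> \<Otimes>\<^sub>M \<nu>"
    using I unfolding indep_var_distribution_eq \<mu>_def \<nu>_def by simp
  also have "(\<integral>p. exp (- fst p) * h (fst p + snd p) \<partial>(\<mu> \<Otimes>\<^sub>M \<nu>)) = (\<integral>x. (\<integral>y. exp (-x) * h (x + y) \<partial>\<nu>) \<partial>\<mu>)"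
    using \<mu>\<nu>.integral_fst'[OF int1] by simp
  also have "\<dots> = (\<integral>x. (\<integral>t. (if x \<le> t then h t * exp (-t) else 0) \<partial>lborel) \<partial>\<mu>)"
  proof (rule Bochner_Integration.integral_cong[OF refl])
    fix x
    show "(\<integral>y. exp (-x) * h (x + y) \<partial>\<nu>) = (\<integral>t. (if x \<le> t then h t * exp (-t) else 0) \<partial>lborel)"
      using conjunct1[OF conjunct2[OF inner[of h B x, OF hm hb]]] by (simp add: ind_if)
  qed
  also have "\<dots> = (\<integral>t. (\<integral>x. (if x \<le> t then h t * exp (-t) else 0) \<partial>\<mu>) \<partial>lborel)"
    using \<mu>L.Fubini_integral[OF int2] by simp
  also have "\<dots> = (\<integral>t. h t * (exp (-t) * cdf (distr M borel X) t) \<partial>lborel)"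
    using col by (simp add: \<mu>_def)
  finally show "(\<integral>\<omega>. exp (- X \<omega>) * h (X \<omega> + Y \<omega>) \<partial>M) = (\<integral>t. h t * (exp (-t) * cdf (distr M borel X) t) \<partial>lborel)" .
qed

lemma dens_Icc:
  fixes q :: "real \<Rightarrow> real"
  assumes mu: "\<mu> = density lborel (\<lambda>t. ennreal (q t))" and nn: "\<And>t. 0 \<le> q t"
    and qc: "continuous_on UNIV q"
  shows "emeasure \<mu> {a..b} = ennreal (integral {a..b} q)"
proof -
  have [measurable]: "q \<in> borel_measurable borel" using qc by (rule borel_measurable_continuous_onI)
  have "emeasure \<mu> {a..b} = (\<integral>\<^sup>+x. ennreal (q x) * indicator {a..b} x \<partial>lborel)"
    by (simp add: mu emeasure_density)
  also have "\<dots> = (\<integral>\<^sup>+x. ennreal (indicator {a..b} x * q x) \<partial>lborel)"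
    by (intro nn_integral_cong) (auto simp: indicator_def)
  also have "\<dots> = ennreal (integral {a..b} q)"
    by (rule nn_integral_has_integral_lebesgue)
      (auto intro!: has_integral_integral integrable_continuous_interval continuous_on_subset[OF qc] nn)
  finally show ?thesis .
qed

lemma dens_cdf_diff:
  fixes q :: "real \<Rightarrow> real"
  assumes rd: "real_distribution \<mu>" and mu: "\<mu> = density lborel (\<lambda>t. ennreal (q t))" and nn: "\<And>t. 0 \<le> q t"
    and qc: "continuous_on UNIV q" and ab: "a \<le> b"
  shows "cdf \<mu> b - cdf \<mu> a = integral {a..b} q"
proof (cases "a = b")
  case True then show ?thesis by simp
next
  case False
  then have ab': "a < b" using ab by simp
  interpret real_distribution \<mu> by (rule rd)
  have m: "measure \<mu> {c..d} = integral {c..d} q" if "c \<le> d" for c d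
  proof -
    have "0 \<le> integral {c..d} q" by (rule integral_nonneg) (auto intro!: integrable_continuous_interval continuous_on_subset[OF qc] nn)
    then show ?thesis using dens_Icc[OF mu nn qc, of c d] by (simp add: measure_def)
  qed
  have "cdf \<mu> b - cdf \<mu> a = measure \<mu> {a<..b}" by (rule cdf_diff_eq[OF ab'])
  also have "{a<..b} = {a..b} - {a..a}" using ab' by auto
  also have "measure \<mu> ({a..b} - {a..a}) = measure \<mu> {a..b} - measure \<mu> {a..a}"
    by (rule finite_measure_Diff) (use ab' in auto)
  also have "\<dots> = integral {a..b} q" using m[of a b] m[of a a] ab' by simp
  finally show ?thesis .
qed

lemma cdf_from_diff:
  fixes G :: "real \<Rightarrow> real"
  assumes rd: "real_distribution \<mu>" and d: "\<And>a b. a \<le> b \<Longrightarrow> cdf \<mu> b - cdf \<mu> a = G b - G a"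
    and G0: "(G \<longlongrightarrow> 0) at_bot"
  shows "cdf \<mu> t = G t"
proof -
  interpret real_distribution \<mu> by (rule rd)
  have lim: "((\<lambda>a. cdf \<mu> a - G a) \<longlongrightarrow> 0 - 0) at_bot"
    by (intro tendsto_diff cdf_lim_at_bot G0)
  have ev: "\<forall>\<^sub>F a in at_bot. cdf \<mu> a - G a = cdf \<mu> t - G t"
    unfolding eventually_at_bot_linorder
  proof (intro exI[of _ t] allI impI)
    fix a assume "a \<le> t"
    from d[OF this] show "cdf \<mu> a - G a = cdf \<mu> t - G t" by linarith
  qed
  have "((\<lambda>a::real. cdf \<mu> t - G t) \<longlongrightarrow> 0) at_bot"
    using Lim_transform_eventually[OF lim ev] by simp
  then show ?thesis by (simp add: tendsto_const_iff)
qed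

lemma exp_neg_at_top: "((\<lambda>t::real. exp (- t)) \<longlongrightarrow> 0) at_top"
  using filterlim_compose[OF exp_at_bot filterlim_uminus_at_bot_at_top] by (simp add: o_def)

lemma gumbel_cdf_at_bot: "((\<lambda>t::real. exp (- exp (-t))) \<longlongrightarrow> 0) at_bot"
  using filterlim_compose[OF exp_at_bot filterlim_compose[OF filterlim_uminus_at_bot_at_top filterlim_compose[OF exp_at_top filterlim_uminus_at_top_at_bot]]]
  by (simp add: o_def)

lemma gumbel_deriv: "((\<lambda>t. exp (- exp (-t))) has_real_derivative gumbel_density x) (at x)"
  unfolding gumbel_density_def
  by (rule derivative_eq_intros refl | simp add: exp_add[symmetric] exp_minus_inverse)+ 

lemma gumbel_cont: "continuous_on UNIV gumbel_density"
  unfolding gumbel_density_def by (intro continuous_intros)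

lemma fwd_cdf:
  assumes rd: "real_distribution \<mu>" and mu: "\<mu> = density lborel (\<lambda>t. ennreal (gumbel_density t))"
  shows "cdf \<mu> t = exp (- exp (-t))"
proof (rule cdf_from_diff[OF rd _ gumbel_cdf_at_bot])
  fix a b :: real assume ab: "a \<le> b"
  have "cdf \<mu> b - cdf \<mu> a = integral {a..b} gumbel_density"
    by (rule dens_cdf_diff[OF rd mu _ gumbel_cont ab]) (simp add: gumbel_density_def)
  also have "\<dots> = exp (- exp (-b)) - exp (- exp (-a))"
    by (rule integral_unique, rule fundamental_theorem_of_calculus[OF ab])
       (auto intro!: DERIV_subset[OF gumbel_deriv] simp: has_real_derivative_iff_has_vector_derivative[symmetric])
  finally show "cdf \<mu> b - cdf \<mu> a = exp (- exp (-b)) - exp (- exp (-a))" .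
qed

lemma conv_cdf:
  assumes rd: "real_distribution \<mu>" and mu: "\<mu> = density lborel (\<lambda>t. ennreal (exp (-t) * cdf \<mu> t))"
  shows "cdf \<mu> t = exp (- exp (-t))"
proof -
  interpret real_distribution \<mu> by (rule rd)
  define F where "F = cdf \<mu>"
  define q where "q t = exp (-t) * F t" for t
  have mu': "\<mu> = density lborel (\<lambda>t. ennreal (q t))" unfolding q_def F_def by (rule mu)
  have Fnn: "0 \<le> F t" for t unfolding F_def by (rule cdf_nonneg)
  have qnn: "0 \<le> q t" for t unfolding q_def using Fnn by simp
  have "mono F" unfolding mono_def F_def by (auto intro: cdf_nondecreasing)
  then have [measurable]: "F \<in> borel_measurable borel" by (rule borel_measurable_mono)
  have atom: "measure \<mu> {x} = 0" for x
  proof -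
    have "{x} \<in> null_sets lborel" by (rule countable_imp_null_set_lborel) simp
    then have "emeasure (density lborel (\<lambda>t. ennreal (q t))) {x} = 0"
      by (simp add: emeasure_density nn_integral_null_set q_def)
    then have "emeasure \<mu> {x} = 0" using mu' by simp
    then show ?thesis by (simp add: measure_def)
  qed
  have Fc: "isCont F x" for x unfolding F_def using isCont_cdf atom by simp
  have qc: "continuous_on UNIV q"
    unfolding q_def by (intro continuous_at_imp_continuous_on ballI continuous_intros Fc)
  have diff: "F b - F a = integral {a..b} q" if "a \<le> b" for a b
    unfolding F_def by (rule dens_cdf_diff[OF rd mu' qnn qc that])
  have deriv: "(F has_real_derivative q x) (at x)" for x
  proof -
    have "((\<lambda>y. integral {x-1..y} q) has_real_derivative q x) (at x within {x-1..x+1})"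
      by (rule integral_has_real_derivative) (auto intro: continuous_on_subset[OF qc])
    then have "((\<lambda>y. integral {x-1..y} q) has_real_derivative q x) (at x within {x-1<..<x+1})"
      by (rule DERIV_subset) auto
    then have "((\<lambda>y. integral {x-1..y} q) has_real_derivative q x) (at x)"
      by (subst (asm) at_within_open) auto
    then have "((\<lambda>y. F (x-1) + integral {x-1..y} q) has_real_derivative q x) (at x)"
      using DERIV_add[OF DERIV_const] by simp
    then show ?thesis
      apply (rule has_field_derivative_transform_within_open[where S="{x-1<..}"])
        apply simp
       apply simp
      subgoal for y using diff[of "x-1" y] by simp
      done
  qed
  define G where "G t = F t * exp (exp (-t))" for t
  have dG: "(G has_real_derivative 0) (at x)" for x
  proof -
    have e: "((\<lambda>t. exp (exp (-t))) has_real_derivative (exp (exp (-x)) * (exp (-x) * -1))) (at x)"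
      by (intro derivative_eq_intros refl) auto
    have "(G has_real_derivative (q x * exp (exp (-x)) + (exp (exp (-x)) * (exp (-x) * -1)) * F x)) (at x)"
      unfolding G_def[abs_def] using DERIV_mult[OF deriv e] by simp
    then show ?thesis by (simp add: q_def algebra_simps)
  qed
  have Gc: "G s = G t" for s using DERIV_isconst_all dG by blast
  have "(G \<longlongrightarrow> 1 * exp 0) at_top"
    unfolding G_def[abs_def] F_def by (intro tendsto_mult cdf_lim_at_top_prob tendsto_exp exp_neg_at_top)
  moreover have "G = (\<lambda>s. G t)" using Gc by auto
  ultimately have "((\<lambda>s::real. G t) \<longlongrightarrow> 1) at_top" by simp
  then have "G t = 1" by (simp add: tendsto_const_iff)
  then have "F t = 1 / exp (exp (-t))" unfolding G_def by (simp add: field_simps)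
  then show ?thesis by (simp add: F_def exp_minus field_simps)
qed

lemma Lip2_one: "Lip2 (\<lambda>x. x) (\<lambda>x. 1)"
proof -
  have a: "1-lipschitz_on UNIV (\<lambda>x::real. x)" by (rule lipschitz_on_id)
  have b: "0-lipschitz_on UNIV (\<lambda>x::real. 1::real)" by (rule lipschitz_on_constant)
  show ?thesis unfolding Lip2_def using a b by (auto intro: DERIV_ident)
qed

lemma Lip2_cos:
  assumes s: "s \<noteq> 0"
  shows "Lip2 (\<lambda>x. sin (s * x) / s) (\<lambda>x. cos (s * x))"
proof -
  have d1: "((\<lambda>x. sin (s * x) / s) has_real_derivative cos (s * x)) (at x)" for x
  proof -
    have "((\<lambda>x. sin (s * x)) has_real_derivative cos (s * x) * s) (at x)"
      by (auto intro!: derivative_eq_intros)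
    from DERIV_cdivide[OF this, of s] show ?thesis using s by simp
  qed
  have d2: "((\<lambda>x. cos (s * x)) has_real_derivative - (sin (s * x) * s)) (at x)" for x
    by (auto intro!: derivative_eq_intros)
  have "1-lipschitz_on UNIV (\<lambda>x. sin (s * x) / s)"
    by (rule lip_deriv[OF d1]) simp
  moreover have "\<bar>s\<bar>-lipschitz_on UNIV (\<lambda>x. cos (s * x))"
  proof (rule lip_deriv[OF d2])
    fix x
    have "\<bar>sin (s * x)\<bar> * \<bar>s\<bar> \<le> 1 * \<bar>s\<bar>" by (intro mult_right_mono) auto
    then show "\<bar>- (sin (s * x) * s)\<bar> \<le> \<bar>s\<bar>" by (simp add: abs_mult)
  qed
  ultimately show ?thesis unfolding Lip2_def using d1 by blast
qed

lemma Lip2_sin: "Lip2 (\<lambda>x. - cos (s * x) / s) (\<lambda>x. sin (s * x))"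
proof (cases "s = 0")
  case True
  then show ?thesis unfolding Lip2_def
    by (auto intro!: exI[of _ 0] lipschitz_on_constant)
next
  case False
  note s = this
  have d1: "((\<lambda>x. - cos (s * x) / s) has_real_derivative sin (s * x)) (at x)" for x
  proof -
    have "((\<lambda>x. - cos (s * x)) has_real_derivative sin (s * x) * s) (at x)"
      by (auto intro!: derivative_eq_intros)
    from DERIV_cdivide[OF this, of s] show ?thesis using s by simp
  qed
  have d2: "((\<lambda>x. sin (s * x)) has_real_derivative cos (s * x) * s) (at x)" for x
    by (auto intro!: derivative_eq_intros)
  have "1-lipschitz_on UNIV (\<lambda>x. - cos (s * x) / s)"
    by (rule lip_deriv[OF d1]) simp
  moreover have "\<bar>s\<bar>-lipschitz_on UNIV (\<lambda>x. sin (s * x))"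
  proof (rule lip_deriv[OF d2])
    fix x
    have "\<bar>cos (s * x)\<bar> * \<bar>s\<bar> \<le> 1 * \<bar>s\<bar>" by (intro mult_right_mono) auto
    then show "\<bar>cos (s * x) * s\<bar> \<le> \<bar>s\<bar>" by (simp add: abs_mult)
  qed
  ultimately show ?thesis unfolding Lip2_def using d1 by blast
qed

lemma char_real:
  assumes "real_distribution N"
  shows "char N s = complex_of_real (\<integral>x. cos (s * x) \<partial>N) + \<i> * complex_of_real (\<integral>x. sin (s * x) \<partial>N)"
proof -
  interpret real_distribution N by (rule assms)
  have ic: "integrable N (\<lambda>x. cos (s * x))" by (rule integrable_const_bound[where B=1]) auto
  have isn: "integrable N (\<lambda>x. sin (s * x))" by (rule integrable_const_bound[where B=1]) auto
  have "char N s = (CLINT x|N. complex_of_real (cos (s * x)) + \<i> * complex_of_real (sin (s * x)))"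
    unfolding char_def
    by (intro Bochner_Integration.integral_cong refl) (simp only: cis_conv_exp[symmetric], simp add: complex_eq_iff)
  also have "\<dots> = (CLINT x|N. complex_of_real (cos (s * x))) + (CLINT x|N. \<i> * complex_of_real (sin (s * x)))"
    by (rule Bochner_Integration.integral_add) (auto simp: complex_of_real_integrable_eq ic isn)
  also have "\<dots> = complex_of_real (\<integral>x. cos (s * x) \<partial>N) + \<i> * complex_of_real (\<integral>x. sin (s * x) \<partial>N)"
    by simp
  finally show ?thesis .
qed

lemma gumbel_eq: "gumbel_density t = exp (-t) * exp (- exp (-t))"
  by (simp add: gumbel_density_def mult_exp_exp)

theorem theorem2p4:
  fixes M :: "'a measure" and X Y :: "'a \<Rightarrow> real"
  assumes "prob_space M"
    and "X \<in> borel_measurable M"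
    and "integrable M (\<lambda>\<omega>. exp (- X \<omega>))"
    and "distributed M lborel Y (exponential_density 1)"
    and "prob_space.indep_var M borel X borel Y"
  shows "distributed M lborel X gumbel_density \<longleftrightarrow>
    (\<forall>f f'. Lip2 f f' \<longrightarrow>
       (\<integral>\<omega>. f' (X \<omega>) \<partial>M) = (\<integral>\<omega>. exp (- X \<omega>) * f' (X \<omega> + Y \<omega>) \<partial>M))"
proof -
  interpret prob_space M by (rule assms(1))
  note Xm[measurable] = assms(2)
  define \<mu> where "\<mu> = distr M borel X"
  have rd\<mu>: "real_distribution \<mu>" unfolding \<mu>_def by simp
  have dX: "distr M lborel X = \<mu>" unfolding \<mu>_def by (rule distr_cong) auto
  have keyI: "integrable lborel (\<lambda>t. h t * (exp (-t) * cdf \<mu> t)) \<and>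
      (\<integral>\<omega>. exp (- X \<omega>) * h (X \<omega> + Y \<omega>) \<partial>M) = (\<integral>t. h t * (exp (-t) * cdf \<mu> t) \<partial>lborel)"
    if "h \<in> borel_measurable borel" "\<And>x. \<bar>h x\<bar> \<le> B" for h B
    using key[OF assms that] unfolding \<mu>_def by blast
  have EX: "(\<integral>\<omega>. h (X \<omega>) \<partial>M) = (\<integral>x. h x \<partial>\<mu>)" if [measurable]: "h \<in> borel_measurable borel" for h :: "real \<Rightarrow> real"
    unfolding \<mu>_def by (rule integral_distr[symmetric]) auto
  show ?thesis
  proof
    assume D: "distributed M lborel X gumbel_density"
    have mu: "\<mu> = density lborel (\<lambda>t. ennreal (gumbel_density t))"
      using D dX by (simp add: distributed_def)
    have Fc: "cdf \<mu> t = exp (- exp (-t))" for t by (rule fwd_cdf[OF rd\<mu> mu])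
    show "\<forall>f f'. Lip2 f f' \<longrightarrow>
       (\<integral>\<omega>. f' (X \<omega>) \<partial>M) = (\<integral>\<omega>. exp (- X \<omega>) * f' (X \<omega> + Y \<omega>) \<partial>M)"
    proof (intro allI impI)
      fix f f' assume L: "Lip2 f f'"
      then obtain L1 L2 where L1: "L1-lipschitz_on UNIV f" and L2: "L2-lipschitz_on UNIV f'"
        and d: "\<And>x. (f has_real_derivative f' x) (at x)"
        unfolding Lip2_def by blast
      have bd: "\<bar>f' x\<bar> \<le> L1" for x using lip_deriv_bound[OF L1 d] .
      have cont: "continuous_on UNIV f'" using L2 by (rule lipschitz_on_continuous_on)
      have fm[measurable]: "f' \<in> borel_measurable borel" using cont by (rule borel_measurable_continuous_onI)
      have "(\<integral>\<omega>. exp (- X \<omega>) * f' (X \<omega> + Y \<omega>) \<partial>M) = (\<integral>t. f' t * (exp (-t) * cdf \<mu> t) \<partial>lborel)"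
        using keyI[OF fm bd] by blast
      also have "\<dots> = (\<integral>t. gumbel_density t * f' t \<partial>lborel)"
        by (intro Bochner_Integration.integral_cong refl) (simp add: Fc gumbel_eq)
      also have "\<dots> = (\<integral>\<omega>. f' (X \<omega>) \<partial>M)"
        by (rule distributed_integral[OF D]) (auto simp: gumbel_density_def)
      finally show "(\<integral>\<omega>. f' (X \<omega>) \<partial>M) = (\<integral>\<omega>. exp (- X \<omega>) * f' (X \<omega> + Y \<omega>) \<partial>M)" by simp
    qed
  next
    assume H: "\<forall>f f'. Lip2 f f' \<longrightarrow>
       (\<integral>\<omega>. f' (X \<omega>) \<partial>M) = (\<integral>\<omega>. exp (- X \<omega>) * f' (X \<omega> + Y \<omega>) \<partial>M)"
    define q where "q t = exp (-t) * cdf \<mu> t" for t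
    interpret \<mu>: real_distribution \<mu> by (rule rd\<mu>)
    have gen: "(\<integral>x. h x \<partial>\<mu>) = (\<integral>t. h t * q t \<partial>lborel) \<and> integrable lborel (\<lambda>t. h t * q t)"
      if "Lip2 f h" "h \<in> borel_measurable borel" "\<And>x. \<bar>h x\<bar> \<le> B" for f h B
    proof -
      have "(\<integral>x. h x \<partial>\<mu>) = (\<integral>\<omega>. h (X \<omega>) \<partial>M)" using EX[OF that(2)] by simp
      also have "\<dots> = (\<integral>\<omega>. exp (- X \<omega>) * h (X \<omega> + Y \<omega>) \<partial>M)" using H that(1) by blast
      finally show ?thesis using keyI[OF that(2,3)] unfolding q_def by simp
    qed
    have g1: "(\<integral>x. 1 \<partial>\<mu>) = (\<integral>t. 1 * q t \<partial>lborel) \<and> integrable lborel (\<lambda>t. 1 * q t)"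
      by (rule gen[OF Lip2_one, of 1]) auto
    have gcos: "(\<integral>x. cos (s * x) \<partial>\<mu>) = (\<integral>t. cos (s * t) * q t \<partial>lborel)" for s
    proof (cases "s = 0")
      case True then show ?thesis using g1 by simp
    next
      case False
      show ?thesis using gen[OF Lip2_cos[OF False], of 1] by auto
    qed
    have gsin: "(\<integral>x. sin (s * x) \<partial>\<mu>) = (\<integral>t. sin (s * t) * q t \<partial>lborel)" for s
      using gen[OF Lip2_sin, of s 1] by auto
    have qnn: "0 \<le> q t" for t unfolding q_def using \<mu>.cdf_nonneg[of t] by simp
    have "mono (cdf \<mu>)" unfolding mono_def by (auto intro: \<mu>.cdf_nondecreasing)
    then have [measurable]: "cdf \<mu> \<in> borel_measurable borel" by (rule borel_measurable_mono)
    have qm[measurable]: "q \<in> borel_measurable borel" unfolding q_def[abs_def] by measurable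
    define Q where "Q = density lborel (\<lambda>t. ennreal (q t))"
    have "emeasure Q (space Q) = (\<integral>\<^sup>+t. ennreal (q t) \<partial>lborel)"
      by (simp add: Q_def emeasure_density)
    also have "\<dots> = ennreal (\<integral>t. q t \<partial>lborel)"
      using g1 qnn by (intro nn_integral_eq_integral) auto
    also have "(\<integral>t. q t \<partial>lborel) = 1" using g1 \<mu>.prob_space by simp
    finally have "emeasure Q (space Q) = 1" by simp
    then have rdQ: "real_distribution Q"
      unfolding real_distribution_def real_distribution_axioms_def
      by (auto intro: prob_spaceI simp: Q_def)
    have intQ: "(\<integral>x. g x \<partial>Q) = (\<integral>t. g t * q t \<partial>lborel)" if [measurable]: "g \<in> borel_measurable borel" for g :: "real \<Rightarrow> real"
      unfolding Q_def by (subst integral_density) (auto simp: qnn mult.commute)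
    have "char \<mu> = char Q"
    proof
      fix s
      show "char \<mu> s = char Q s"
        unfolding char_real[OF rd\<mu>] char_real[OF rdQ] by (simp add: intQ gcos gsin)
    qed
    then have \<mu>Q: "\<mu> = Q" by (rule Levy_uniqueness[OF rd\<mu> rdQ])
    have Fc: "cdf \<mu> t = exp (- exp (-t))" for t
      by (rule conv_cdf[OF rd\<mu>]) (use \<mu>Q in \<open>simp add: Q_def q_def\<close>)
    have qg: "q = gumbel_density" by (rule ext) (simp add: q_def Fc gumbel_eq)
    show "distributed M lborel X gumbel_density"
      unfolding distributed_def
    proof (intro conjI)
      show "distr M lborel X = density lborel (\<lambda>x. ennreal (gumbel_density x))"
        using dX \<mu>Q by (simp add: Q_def qg)
      show "(\<lambda>x. ennreal (gumbel_density x)) \<in> borel_measurable lborel"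
        by (simp add: gumbel_density_def)
      show "X \<in> M \<rightarrow>\<^sub>M lborel" by simp
    qed
  qed
qed

end
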